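(* $\Theta_t \cong \Gamma_t$ (as graphs).
   Context: $\mathcal{M}_{2n}$ is the set of perfect matchings of $K_{2n}$ and $\mathcal{M}_{2n-1}$ the set of near-perfect matchings of $K_{2n-1}$ (matchings with $n-1$ edges). $\Gamma_t$ is the graph on $\mathcal{M}_{2n}$ in which $m,m'$ are adjacent iff $|m\cap m'|<t$. For $m,m'\in\mathcal{M}_{2n-1}$, the multigraph union $m\cup m'$ is a disjoint union of even cycles (a common edge counting as a cycle of length $2$) and exactly one path with an even number of edges (possibly a single vertex, when $m,m'$ leave the same vertex unmatched); $d'(m,m')\vdash 2n-1$ is the partition whose parts are the numbers of vertices of these components (so each cycle of length $2k$ gives a part $2k$ and the path with $\ell$ edges gives the unique odd part $\ell+1$). $\Theta_t$ is the graph on $\mathcal{M}_{2n-1}$ in which $m,m'$ are adjacent iff $d'(m,m')$ has fewer than $t$ parts of size at most $2$. *)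

theory Defs
  imports Main "HOL-Library.Multiset"
begin

text \<open>Vertices of K_N are {0..<N}; edges are 2-element sets of vertices.\<close>

definition edges_of :: "nat set \<Rightarrow> nat set set" where
  "edges_of V = {e. \<exists>a b. a \<noteq> b \<and> a \<in> V \<and> b \<in> V \<and> e = {a, b}}"

definition is_matching :: "nat set \<Rightarrow> nat set set \<Rightarrow> bool" where
  "is_matching V m \<longleftrightarrow> m \<subseteq> edges_of V \<and>
     (\<forall>e\<in>m. \<forall>e'\<in>m. e \<noteq> e' \<longrightarrow> e \<inter> e' = {})"

definition perfect_matchings :: "nat \<Rightarrow> nat set set set" where
  "perfect_matchings n = {m. is_matching {0..<2*n} m \<and> \<Union>m = {0..<2*n}}"

definition near_perfect_matchings :: "nat \<Rightarrow> nat set set set" where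
  "near_perfect_matchings n = {m. is_matching {0..<2*n-1} m \<and> card m = n - 1}"

text \<open>Connected components of the (multi)graph with vertex set V and edge set E
  (parallel edges do not affect vertex sets of components).\<close>
definition adj_rel :: "nat set set \<Rightarrow> (nat \<times> nat) set" where
  "adj_rel E = {(x, y). {x, y} \<in> E}"

definition component :: "nat set \<Rightarrow> nat set set \<Rightarrow> nat \<Rightarrow> nat set" where
  "component V E v = {w \<in> V. (v, w) \<in> (adj_rel E)\<^sup>*}"

definition components :: "nat set \<Rightarrow> nat set set \<Rightarrow> nat set set" where
  "components V E = component V E ` V"

definition d' :: "nat \<Rightarrow> nat set set \<Rightarrow> nat set set \<Rightarrow> nat multiset" where
  "d' n m m' = image_mset card (mset_set (components {0..<2*n-1} (m \<union> m')))"

definition Gamma_adj :: "nat \<Rightarrow> nat \<Rightarrow> nat set set \<Rightarrow> nat set set \<Rightarrow> bool" where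
  "Gamma_adj n t m m' \<longleftrightarrow> m \<noteq> m' \<and> card (m \<inter> m') < t"

definition Theta_adj :: "nat \<Rightarrow> nat \<Rightarrow> nat set set \<Rightarrow> nat set set \<Rightarrow> bool" where
  "Theta_adj n t m m' \<longleftrightarrow> m \<noteq> m' \<and> size (filter_mset (\<lambda>p. p \<le> 2) (d' n m m')) < t"

definition graph_iso :: "'a set \<Rightarrow> ('a \<Rightarrow> 'a \<Rightarrow> bool) \<Rightarrow> 'b set \<Rightarrow> ('b \<Rightarrow> 'b \<Rightarrow> bool) \<Rightarrow> bool" where
  "graph_iso V1 E1 V2 E2 \<longleftrightarrow> (\<exists>f. bij_betw f V1 V2 \<and>
     (\<forall>x\<in>V1. \<forall>y\<in>V1. E1 x y \<longleftrightarrow> E2 (f x) (f y)))"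

end

theory Submission
  imports Defs
begin

lemma edges_of_sub: "edges_of V \<subseteq> Pow V"
  by (auto simp: edges_of_def)

lemma edges_of_mono: "V \<subseteq> W \<Longrightarrow> edges_of V \<subseteq> edges_of W"
  unfolding edges_of_def by blast

lemma edgeE:
  assumes "e \<in> edges_of V"
  obtains a b where "a \<noteq> b" "a \<in> V" "b \<in> V" "e = {a, b}"
  using assms unfolding edges_of_def by blast

lemma edge_card: "e \<in> edges_of V \<Longrightarrow> card e = 2"
  by (auto simp: edges_of_def)

lemma edge_other:
  assumes "e \<in> edges_of V" "v \<in> e"
  obtains y where "y \<noteq> v" "y \<in> V" "v \<in> V" "e = {v, y}"
proof -
  obtain a b where ab: "a \<noteq> b" "a \<in> V" "b \<in> V" "e = {a, b}" using edgeE[OF assms(1)] by blast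
  show ?thesis
  proof (cases "v = a")
    case True then show ?thesis using ab that[of b] by simp
  next
    case False then have "v = b" using ab assms(2) by blast
    then show ?thesis using ab that[of a] by (simp add: insert_commute)
  qed
qed

lemma matching_edges: "is_matching V m \<Longrightarrow> m \<subseteq> edges_of V"
  unfolding is_matching_def by (rule conjunct1)

lemma matching_disj: "is_matching V m \<Longrightarrow> e \<in> m \<Longrightarrow> e' \<in> m \<Longrightarrow> e \<noteq> e' \<Longrightarrow> e \<inter> e' = {}"
  unfolding is_matching_def by blast

lemma matching_same: "is_matching V m \<Longrightarrow> e \<in> m \<Longrightarrow> e' \<in> m \<Longrightarrow> x \<in> e \<Longrightarrow> x \<in> e' \<Longrightarrow> e = e'"
  using matching_disj by blast

lemma matching_Union_sub: assumes "is_matching V m" shows "\<Union>m \<subseteq> V"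
proof -
  have "m \<subseteq> edges_of V" using assms by (rule matching_edges)
  then have "m \<subseteq> Pow V" using edges_of_sub by (rule subset_trans)
  then show ?thesis by blast
qed

lemma matching_card_Union:
  assumes "is_matching V m" "finite V"
  shows "card (\<Union>m) = 2 * card m"
proof -
  have ms: "m \<subseteq> edges_of V" using assms(1) by (rule matching_edges)
  have dj: "\<And>e e'. e \<in> m \<Longrightarrow> e' \<in> m \<Longrightarrow> e \<noteq> e' \<Longrightarrow> e \<inter> e' = {}"
    using assms(1) by (rule matching_disj)
  have "card (\<Union>m) = sum card m"
  proof (rule card_Union_disjoint)
    show "pairwise disjnt m" unfolding pairwise_def disjnt_def using dj by blast
    fix A assume "A \<in> m"
    then have "A \<subseteq> V" using ms edges_of_sub by blast
    then show "finite A" using assms(2) by (rule finite_subset)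
  qed
  also have "\<dots> = sum (\<lambda>_. 2) m"
    using ms by (intro sum.cong) (auto intro: edge_card)
  finally show ?thesis by simp
qed

lemma nearD: "m \<in> near_perfect_matchings n \<Longrightarrow> is_matching {0..<2*n-1} m"
  "m \<in> near_perfect_matchings n \<Longrightarrow> card m = n - 1"
  by (simp_all add: near_perfect_matchings_def)

lemma perfD: "p \<in> perfect_matchings n \<Longrightarrow> is_matching {0..<2*n} p"
  "p \<in> perfect_matchings n \<Longrightarrow> \<Union>p = {0..<2*n}"
  by (simp_all add: perfect_matchings_def)

lemma hole_ex1:
  assumes "n \<ge> 1" "m \<in> near_perfect_matchings n"
  shows "\<exists>!u. u < 2*n-1 \<and> u \<notin> \<Union>m"
proof -
  let ?V = "{0..<2*n-1}"
  have M: "is_matching ?V m" "card m = n - 1" using nearD[OF assms(2)] by simp_all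
  have c: "card (\<Union>m) = 2*(n-1)" using matching_card_Union[OF M(1)] M(2) by simp
  have s: "\<Union>m \<subseteq> ?V" using matching_Union_sub[OF M(1)] .
  have f: "finite (\<Union>m)" using s by (rule finite_subset) simp
  have "card (?V - \<Union>m) = card ?V - card (\<Union>m)" using f s by (rule card_Diff_subset)
  also have "\<dots> = 1" using c assms(1) by simp
  finally have "card (?V - \<Union>m) = 1" .
  then obtain u where uu: "?V - \<Union>m = {u}" using card_1_singletonE by blast
  have "u \<in> ?V - \<Union>m" using uu by blast
  then have u1: "u < 2*n-1" "u \<notin> \<Union>m" by auto
  have u2: "v = u" if "v < 2*n-1" "v \<notin> \<Union>m" for v
  proof -
    have "v \<in> ?V - \<Union>m" using that by simp
    then show "v = u" using uu by blast
  qed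
  show ?thesis
  proof (rule ex1I[of _ u])
    show "u < 2*n-1 \<and> u \<notin> \<Union>m" using u1 by simp
    fix v assume "v < 2*n-1 \<and> v \<notin> \<Union>m"
    then show "v = u" using u2 by simp
  qed
qed

definition hole :: "nat \<Rightarrow> nat set set \<Rightarrow> nat" where
  "hole n m = (THE u. u < 2*n-1 \<and> u \<notin> \<Union>m)"

lemma hole:
  assumes "n \<ge> 1" "m \<in> near_perfect_matchings n"
  shows "hole n m < 2*n-1" "hole n m \<notin> \<Union>m" "\<And>v. v < 2*n-1 \<Longrightarrow> v \<notin> \<Union>m \<Longrightarrow> v = hole n m"
proof -
  have P: "hole n m < 2*n-1 \<and> hole n m \<notin> \<Union>m"
    unfolding hole_def by (rule theI'[OF hole_ex1[OF assms]])
  then show "hole n m < 2*n-1" "hole n m \<notin> \<Union>m" by simp_all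
  fix v assume "v < 2*n-1" "v \<notin> \<Union>m"
  then have "hole n m = v" unfolding hole_def
    by (intro the1_equality[OF hole_ex1[OF assms]]) simp
  then show "v = hole n m" by simp
qed



lemma comp_self: "v \<in> V \<Longrightarrow> v \<in> component V E v"
  by (simp add: component_def)

lemma comp_sub: "component V E v \<subseteq> V"
  by (auto simp: component_def)

lemma comp_step:
  assumes "a \<in> component V E v" "{a,b} \<in> E" "E \<subseteq> edges_of V"
  shows "b \<in> component V E v"
proof -
  have "{a,b} \<in> edges_of V" using assms(2,3) by (rule subsetD[rotated])
  then have "{a,b} \<subseteq> V" using edges_of_sub by blast
  then have b: "b \<in> V" by simp
  have ab: "(a,b) \<in> adj_rel E" using assms(2) by (simp add: adj_rel_def)
  have va: "(v,a) \<in> (adj_rel E)\<^sup>*" using assms(1) by (simp add: component_def)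
  have "(v,b) \<in> (adj_rel E)\<^sup>*" using va ab by (rule rtrancl_into_rtrancl)
  then show ?thesis using b by (simp add: component_def)
qed

lemma comp_closed:
  assumes "v \<in> S" "\<And>a b. a \<in> S \<Longrightarrow> {a,b} \<in> E \<Longrightarrow> b \<in> S"
  shows "component V E v \<subseteq> S"
proof
  fix w assume "w \<in> component V E v"
  then have "(v, w) \<in> (adj_rel E)\<^sup>*" by (simp add: component_def)
  then show "w \<in> S"
  proof (induction rule: rtrancl_induct)
    case base then show ?case using assms(1) .
  next
    case (step y z)
    then have "{y,z} \<in> E" by (simp add: adj_rel_def)
    then show ?case using assms(2) step.IH by blast
  qed
qed

lemma comp_isolated:
  assumes "v \<in> V" "v \<notin> \<Union>E"
  shows "component V E v = {v}"
proof -
  have "component V E v \<subseteq> {v}"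
  proof (rule comp_closed)
    fix a b assume "a \<in> {v}" "{a,b} \<in> E"
    then have "v \<in> \<Union>E" by blast
    then show "b \<in> {v}" using assms(2) by simp
  qed simp
  then show ?thesis using comp_self[OF assms(1)] by blast
qed

lemma pair_in:
  assumes "n \<ge> 1" "M \<in> near_perfect_matchings n" "v \<noteq> x" "v < 2*n-1" "x < 2*n-1"
    "\<And>b. {v,b} \<in> M \<Longrightarrow> b \<in> {v,x}" "\<And>b. {x,b} \<in> M \<Longrightarrow> b \<in> {v,x}"
  shows "{v,x} \<in> M"
proof -
  have Me: "M \<subseteq> edges_of {0..<2*n-1}" using nearD(1)[OF assms(2)] by (rule matching_edges)
  show ?thesis
  proof (cases "v \<in> \<Union>M")
    case True
    then obtain e where e: "e \<in> M" "v \<in> e" by blast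
    then have "e \<in> edges_of {0..<2*n-1}" using Me by blast
    then obtain y where y: "y \<noteq> v" "e = {v,y}" using edge_other e(2) by metis
    then have "y \<in> {v,x}" using assms(6) e(1) by blast
    then have "y = x" using y(1) by blast
    then show ?thesis using y(2) e(1) by simp
  next
    case F1: False
    show ?thesis
    proof (cases "x \<in> \<Union>M")
      case True
      then obtain e where e: "e \<in> M" "x \<in> e" by blast
      then have "e \<in> edges_of {0..<2*n-1}" using Me by blast
      then obtain y where y: "y \<noteq> x" "e = {x,y}" using edge_other e(2) by metis
      then have "y \<in> {v,x}" using assms(7) e(1) by blast
      then have "y = v" using y(1) by blast
      then show ?thesis using y(2) e(1) by (simp add: insert_commute)
    next
      case False
      have "v = hole n M" using hole(3)[OF assms(1,2)] F1 assms(4) by blast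
      moreover have "x = hole n M" using hole(3)[OF assms(1,2)] False assms(5) by blast
      ultimately show ?thesis using assms(3) by simp
    qed
  qed
qed



context
  fixes n :: nat and m m' :: "nat set set"
  assumes n1: "n \<ge> 1" and nm: "m \<in> near_perfect_matchings n" and nm': "m' \<in> near_perfect_matchings n"
begin

lemma E_sub: "m \<union> m' \<subseteq> edges_of {0..<2*n-1}"
  using matching_edges[OF nearD(1)[OF nm]] matching_edges[OF nearD(1)[OF nm']] by blast

lemma comp_card_ne0:
  assumes "c \<in> components {0..<2*n-1} (m \<union> m')"
  shows "card c \<noteq> 0"
proof -
  obtain v where v: "v \<in> {0..<2*n-1}" "c = component {0..<2*n-1} (m \<union> m') v"
    using assms unfolding components_def by blast
  have "v \<in> c" using v comp_self by simp
  moreover have "finite c" using v(2) comp_sub by (metis finite_atLeastLessThan finite_subset)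
  ultimately show ?thesis by auto
qed

lemma comps_size2: "{c \<in> components {0..<2*n-1} (m \<union> m'). card c = 2} = m \<inter> m'"
proof
  let ?V = "{0..<2*n-1}" and ?E = "m \<union> m'"
  show "{c \<in> components ?V ?E. card c = 2} \<subseteq> m \<inter> m'"
  proof
    fix c assume "c \<in> {c \<in> components ?V ?E. card c = 2}"
    then have c: "c \<in> components ?V ?E" "card c = 2" by simp_all
    obtain v where v: "v \<in> ?V" "c = component ?V ?E v"
      using c(1) unfolding components_def by blast
    have vc: "v \<in> c" using v comp_self by simp
    have fc: "finite c" using v(2) comp_sub by (metis finite_atLeastLessThan finite_subset)
    have "v \<in> \<Union>?E"
    proof (rule ccontr)
      assume "v \<notin> \<Union>?E"
      then have "c = {v}" using v comp_isolated by simp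
      then show False using c(2) by simp
    qed
    then obtain e where e: "e \<in> ?E" "v \<in> e" by blast
    have "e \<in> edges_of ?V" using e(1) E_sub by blast
    then obtain x where x: "x \<noteq> v" "x \<in> ?V" "e = {v,x}" using edge_other e(2) by metis
    have xc: "x \<in> c" using comp_step[of v ?V ?E v x] vc v(2) e(1) x(3) E_sub by simp
    have s1: "{v,x} \<subseteq> c" using vc xc by simp
    have s2: "card {v,x} = card c" using x(1) c(2) by simp
    have cvx: "c = {v,x}" using card_subset_eq[OF fc s1 s2] by simp
    have cl: "b \<in> {v,x}" if "{a,b} \<in> ?E" "a \<in> {v,x}" for a b
    proof -
      have "a \<in> c" using that(2) cvx by simp
      then have "b \<in> c" using comp_step[of a ?V ?E v b] v(2) that(1) E_sub by simp
      then show ?thesis using cvx by simp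
    qed
    have "{v,x} \<in> m"
      by (rule pair_in[OF n1 nm]) (use x v cl in auto)
    moreover have "{v,x} \<in> m'"
      by (rule pair_in[OF n1 nm']) (use x v cl in auto)
    ultimately show "c \<in> m \<inter> m'" using cvx by simp
  qed
  show "m \<inter> m' \<subseteq> {c \<in> components ?V ?E. card c = 2}"
  proof
    fix e assume e: "e \<in> m \<inter> m'"
    then have "e \<in> edges_of ?V" using E_sub by blast
    then obtain a b where ab: "a \<noteq> b" "a \<in> ?V" "b \<in> ?V" "e = {a,b}" by (rule edgeE)
    have "component ?V ?E a \<subseteq> {a,b}"
    proof (rule comp_closed)
      fix y z assume y: "y \<in> {a,b}" "{y,z} \<in> ?E"
      show "z \<in> {a,b}"
      proof (cases "{y,z} \<in> m")
        case True
        have "{y,z} = e" using matching_same[OF nearD(1)[OF nm] True, of e y] e y(1) ab(4) by blast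
        then show ?thesis using ab(4) by blast
      next
        case False
        then have yz: "{y,z} \<in> m'" using y(2) by blast
        have "{y,z} = e" using matching_same[OF nearD(1)[OF nm'] yz, of e y] e y(1) ab(4) by blast
        then show ?thesis using ab(4) by blast
      qed
    qed simp
    moreover have "a \<in> component ?V ?E a" using ab(2) by (rule comp_self)
    moreover have "b \<in> component ?V ?E a"
      using comp_step[of a ?V ?E a b] ab(2) e ab(4) E_sub comp_self by blast
    ultimately have ce: "component ?V ?E a = e" using ab(4) by blast
    have "e \<in> components ?V ?E" unfolding components_def using ce ab(2) by blast
    moreover have "card e = 2" using ab by simp
    ultimately show "e \<in> {c \<in> components ?V ?E. card c = 2}" by simp
  qed
qed

lemma comps_size1: "{c \<in> components {0..<2*n-1} (m \<union> m'). card c = 1} =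
   (if hole n m = hole n m' then {{hole n m}} else {})"
proof
  let ?V = "{0..<2*n-1}" and ?E = "m \<union> m'"
  show "{c \<in> components ?V ?E. card c = 1} \<subseteq> (if hole n m = hole n m' then {{hole n m}} else {})"
  proof
    fix c assume "c \<in> {c \<in> components ?V ?E. card c = 1}"
    then have c: "c \<in> components ?V ?E" "card c = 1" by simp_all
    obtain v where v: "v \<in> ?V" "c = component ?V ?E v"
      using c(1) unfolding components_def by blast
    have vc: "v \<in> c" using v comp_self by simp
    obtain w where "c = {w}" using c(2) card_1_singletonE by blast
    then have cv: "c = {v}" using vc by simp
    have nv: "v \<notin> \<Union>?E"
    proof
      assume "v \<in> \<Union>?E"
      then obtain e where e: "e \<in> ?E" "v \<in> e" by blast
      have "e \<in> edges_of ?V" using e(1) E_sub by blast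
      then obtain x where x: "x \<noteq> v" "x \<in> ?V" "e = {v,x}" using edge_other e(2) by metis
      have "x \<in> c" using comp_step[of v ?V ?E v x] vc v(2) e(1) x(3) E_sub by simp
      then show False using cv x(1) by simp
    qed
    have vl: "v < 2*n-1" using v(1) by simp
    have h1: "v = hole n m" using hole(3)[OF n1 nm vl] nv by blast
    have h2: "v = hole n m'" using hole(3)[OF n1 nm' vl] nv by blast
    show "c \<in> (if hole n m = hole n m' then {{hole n m}} else {})"
      using h1 h2 cv by simp
  qed
  show "(if hole n m = hole n m' then {{hole n m}} else {}) \<subseteq> {c \<in> components ?V ?E. card c = 1}"
  proof (cases "hole n m = hole n m'")
    case True
    let ?u = "hole n m"
    have uV: "?u \<in> ?V" using hole(1)[OF n1 nm] by simp
    have "?u \<notin> \<Union>m" using hole(2)[OF n1 nm] .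
    moreover have "?u \<notin> \<Union>m'" using hole(2)[OF n1 nm'] True by simp
    ultimately have "?u \<notin> \<Union>?E" by blast
    then have cu: "component ?V ?E ?u = {?u}" using uV comp_isolated by blast
    have "{?u} \<in> components ?V ?E" unfolding components_def using cu uV by (metis image_eqI)
    then show ?thesis using True by simp
  qed simp
qed

lemma count_small:
  "size (filter_mset (\<lambda>p. p \<le> 2) (d' n m m')) = card (m \<inter> m') + (if hole n m = hole n m' then 1 else 0)"
proof -
  let ?V = "{0..<2*n-1}" and ?E = "m \<union> m'"
  let ?C = "components ?V ?E"
  have fC: "finite ?C" unfolding components_def by simp
  have "size (filter_mset (\<lambda>p. p \<le> 2) (d' n m m')) = card {c \<in> ?C. card c \<le> 2}"
    unfolding d'_def filter_mset_image_mset using fC by simp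
  also have "{c \<in> ?C. card c \<le> 2} = {c \<in> ?C. card c = 1} \<union> {c \<in> ?C. card c = 2}"
    using comp_card_ne0 by fastforce
  also have "card \<dots> = card {c \<in> ?C. card c = 1} + card {c \<in> ?C. card c = 2}"
    by (rule card_Un_disjoint) (use fC in auto)
  also have "\<dots> = card (m \<inter> m') + (if hole n m = hole n m' then 1 else 0)"
    unfolding comps_size1 comps_size2 by simp
  finally show ?thesis .
qed

end


definition fm :: "nat \<Rightarrow> nat set set \<Rightarrow> nat set set" where
  "fm n m = insert {hole n m, 2*n-1} m"

definition gm :: "nat \<Rightarrow> nat set set \<Rightarrow> nat set set" where
  "gm n p = {e \<in> p. 2*n-1 \<notin> e}"

lemma N_notin:
  assumes "m \<in> near_perfect_matchings n" "e \<in> m"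
  shows "2*n-1 \<notin> e"
proof -
  have "\<Union>m \<subseteq> {0..<2*n-1}" using nearD(1)[OF assms(1)] by (rule matching_Union_sub)
  then have "e \<subseteq> {0..<2*n-1}" using assms(2) by blast
  then show ?thesis by auto
qed

lemma g_f:
  assumes "m \<in> near_perfect_matchings n"
  shows "gm n (fm n m) = m"
  unfolding gm_def fm_def using N_notin[OF assms] by auto

lemma f_inter:
  assumes n1: "n \<ge> 1" and nm: "m \<in> near_perfect_matchings n" and nm': "m' \<in> near_perfect_matchings n"
  shows "card (fm n m \<inter> fm n m') = card (m \<inter> m') + (if hole n m = hole n m' then 1 else 0)"
proof -
  let ?h = "{hole n m, 2*n-1}" and ?h' = "{hole n m', 2*n-1}"
  have hm: "?h \<notin> m" and hm': "?h \<notin> m'" and h'm: "?h' \<notin> m" and h'm': "?h' \<notin> m'"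
    using N_notin[OF nm] N_notin[OF nm'] by blast+
  have fin: "finite (m \<inter> m')"
    using matching_Union_sub[OF nearD(1)[OF nm]] by (meson finite_Int finite_UnionD finite_atLeastLessThan finite_subset)
  show ?thesis
  proof (cases "hole n m = hole n m'")
    case True
    then have "fm n m \<inter> fm n m' = insert ?h (m \<inter> m')" unfolding fm_def by auto
    moreover have "?h \<notin> m \<inter> m'" using hm by blast
    ultimately show ?thesis using fin True by simp
  next
    case False
    have hl: "hole n m < 2*n-1" using hole(1)[OF n1 nm] .
    have "?h \<noteq> ?h'" using False hl by (auto simp: doubleton_eq_iff)
    then have "fm n m \<inter> fm n m' = m \<inter> m'" unfolding fm_def using hm' h'm by blast
    then show ?thesis using False by simp
  qed
qed

lemma f_in:
  assumes n1: "n \<ge> 1" and nm: "m \<in> near_perfect_matchings n"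
  shows "fm n m \<in> perfect_matchings n"
proof -
  let ?N = "2*n-1" and ?u = "hole n m"
  let ?h = "{?u, ?N}"
  have M: "is_matching {0..<2*n-1} m" using nearD(1)[OF nm] .
  have ul: "?u < ?N" using hole(1)[OF n1 nm] .
  have un: "?u \<notin> \<Union>m" using hole(2)[OF n1 nm] .
  have hE: "?h \<in> edges_of {0..<2*n}" unfolding edges_of_def
  proof (intro CollectI exI conjI)
    show "?u \<noteq> ?N" using ul by simp
    show "?u \<in> {0..<2*n}" "?N \<in> {0..<2*n}" using ul n1 by auto
  qed (rule refl)
  have mE: "m \<subseteq> edges_of {0..<2*n}"
    using matching_edges[OF M] edges_of_mono[of "{0..<2*n-1}" "{0..<2*n}"] by auto
  have dis: "e \<inter> e' = {}" if "e \<in> insert ?h m" "e' \<in> insert ?h m" "e \<noteq> e'" for e e'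
  proof -
    have hd: "?h \<inter> f = {}" if "f \<in> m" for f
      using un N_notin[OF nm that] that by blast
    show ?thesis
    proof (cases "e = ?h")
      case True then show ?thesis using hd that by blast
    next
      case False
      then have em: "e \<in> m" using that(1) by blast
      show ?thesis
      proof (cases "e' = ?h")
        case True then show ?thesis using hd[OF em] by blast
      next
        case False then have "e' \<in> m" using that(2) by blast
        then show ?thesis using matching_disj[OF M em] that(3) by blast
      qed
    qed
  qed
  have im: "is_matching {0..<2*n} (fm n m)"
    unfolding is_matching_def fm_def using hE mE dis by blast
  have U1: "\<Union>m \<subseteq> {0..<2*n-1}" using matching_Union_sub[OF M] .
  have "\<Union>(fm n m) = {0..<2*n}"
  proof
    show "\<Union>(fm n m) \<subseteq> {0..<2*n}" unfolding fm_def using U1 ul by auto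
    show "{0..<2*n} \<subseteq> \<Union>(fm n m)"
    proof
      fix x assume "x \<in> {0..<2*n}"
      then have x: "x < 2*n" by simp
      show "x \<in> \<Union>(fm n m)"
      proof (cases "x = ?N")
        case True then show ?thesis unfolding fm_def by blast
      next
        case False
        then have xl: "x < 2*n-1" using x by simp
        show ?thesis
        proof (cases "x \<in> \<Union>m")
          case True then show ?thesis unfolding fm_def by blast
        next
          case False
          then have "x = ?u" using hole(3)[OF n1 nm xl] by blast
          then show ?thesis unfolding fm_def by blast
        qed
      qed
    qed
  qed
  then show ?thesis using im by (simp add: perfect_matchings_def)
qed

lemma perf_inv:
  assumes n1: "n \<ge> 1" and pp: "p \<in> perfect_matchings n"
  shows "gm n p \<in> near_perfect_matchings n \<and> fm n (gm n p) = p"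
proof -
  let ?N = "2*n-1"
  have P: "is_matching {0..<2*n} p" using perfD(1)[OF pp] .
  have PU: "\<Union>p = {0..<2*n}" using perfD(2)[OF pp] .
  have "?N \<in> \<Union>p" using PU n1 by simp
  then obtain e where e: "e \<in> p" "?N \<in> e" by blast
  have "e \<in> edges_of {0..<2*n}" using e(1) matching_edges[OF P] by blast
  then obtain u where u: "u \<noteq> ?N" "u \<in> {0..<2*n}" "e = {?N, u}" using edge_other e(2) by metis
  have ul: "u < ?N" using u(1,2) by simp
  have g: "gm n p = p - {e}"
  proof -
    have "e' = e" if "e' \<in> p" "?N \<in> e'" for e'
      using matching_same[OF P that(1) e(1) that(2) e(2)] .
    then show ?thesis unfolding gm_def using e by blast
  qed
  have gE: "p - {e} \<subseteq> edges_of {0..<2*n-1}"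
  proof
    fix e' assume e': "e' \<in> p - {e}"
    then have "e' \<in> edges_of {0..<2*n}" using matching_edges[OF P] by blast
    then obtain a b where ab: "a \<noteq> b" "a \<in> {0..<2*n}" "b \<in> {0..<2*n}" "e' = {a,b}" by (rule edgeE)
    have "?N \<notin> e'" using e' matching_same[OF P _ e(1) _ e(2)] by blast
    then have "a \<noteq> ?N" "b \<noteq> ?N" using ab(4) by auto
    then have "a \<in> {0..<2*n-1}" "b \<in> {0..<2*n-1}" using ab(2,3) by auto
    then show "e' \<in> edges_of {0..<2*n-1}" unfolding edges_of_def using ab(1,4) by blast
  qed
  have gM: "is_matching {0..<2*n-1} (p - {e})"
    unfolding is_matching_def using gE matching_disj[OF P] by blast
  have fp: "finite p" using matching_card_Union[OF P] PU n1 by (metis card.infinite finite_UnionD finite_atLeastLessThan)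
  have "2 * card p = 2 * n" using matching_card_Union[OF P] PU by simp
  then have cp: "card p = n" by simp
  have cg: "card (p - {e}) = n - 1" using cp e(1) fp by simp
  have gN: "p - {e} \<in> near_perfect_matchings n" using gM cg by (simp add: near_perfect_matchings_def)
  have "u \<notin> \<Union>(p - {e})"
  proof
    assume "u \<in> \<Union>(p - {e})"
    then obtain e' where "e' \<in> p - {e}" "u \<in> e'" by blast
    moreover have "u \<in> e" using u(3) by simp
    ultimately show False using matching_same[OF P _ e(1)] by blast
  qed
  then have hu: "u = hole n (p - {e})" using hole(3)[OF n1 gN ul] by blast
  have "fm n (p - {e}) = p" unfolding fm_def using hu[symmetric] u(3) e(1) by (auto simp: insert_commute)
  then show ?thesis using g gN by simp
qed

theorem mainTheorem12:
  fixes n t :: nat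
  assumes "n \<ge> 1"
  shows "graph_iso (near_perfect_matchings n) (Theta_adj n t)
                   (perfect_matchings n) (Gamma_adj n t)"
proof -
  have bij: "bij_betw (fm n) (near_perfect_matchings n) (perfect_matchings n)"
  proof (rule bij_betw_byWitness[where f' = "gm n"])
    show "\<forall>a\<in>near_perfect_matchings n. gm n (fm n a) = a" using g_f by blast
    show "\<forall>a'\<in>perfect_matchings n. fm n (gm n a') = a'" using perf_inv[OF assms] by blast
    show "fm n ` near_perfect_matchings n \<subseteq> perfect_matchings n" using f_in[OF assms] by blast
    show "gm n ` perfect_matchings n \<subseteq> near_perfect_matchings n" using perf_inv[OF assms] by blast
  qed
  have adj: "Theta_adj n t x y \<longleftrightarrow> Gamma_adj n t (fm n x) (fm n y)"
    if x: "x \<in> near_perfect_matchings n" and y: "y \<in> near_perfect_matchings n" for x y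
  proof -
    have "x \<noteq> y \<longleftrightarrow> fm n x \<noteq> fm n y" using g_f[OF x] g_f[OF y] by metis
    moreover have "size (filter_mset (\<lambda>p. p \<le> 2) (d' n x y)) = card (fm n x \<inter> fm n y)"
      using count_small[OF assms x y] f_inter[OF assms x y] by simp
    ultimately show ?thesis unfolding Theta_adj_def Gamma_adj_def by simp
  qed
  show ?thesis unfolding graph_iso_def using bij adj by blast
qed


end
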